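(* Let $X$ be a complete CAT(1) space with $\mathrm{Diam}(X)<\pi/2$. Then every vicinal mapping $T\colon X\to X$ has a fixed point.
   Context: A CAT(1) space is a $\pi$-geodesic metric space in which every geodesic triangle of perimeter $<2\pi$ satisfies the CAT(1) comparison inequality relative to comparison triangles in the unit sphere $\mathbb S^2$. With $C_z=\cos d(Tz,z)$, $T$ is vicinal if for all $x,y\in X$: $\bigl(C_x^2(1+C_y^2)+C_y^2(1+C_x^2)\bigr)\cos d(Tx,Ty)\ge C_x^2(1+C_y^2)\cos d(Tx,y)+C_y^2(1+C_x^2)\cos d(Ty,x)$. *)

theory Defs
  imports "HOL-Analysis.Analysis"
begin

definition S2 :: "(real^3) set" where
  "S2 = sphere 0 1"

definition sdist :: "real^3 \<Rightarrow> real^3 \<Rightarrow> real" where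
  "sdist u v = arccos (u \<bullet> v)"

definition geodesic_seg :: "(real \<Rightarrow> 'a::metric_space) \<Rightarrow> 'a \<Rightarrow> 'a \<Rightarrow> bool" where
  "geodesic_seg g x y \<longleftrightarrow> g 0 = x \<and> g (dist x y) = y \<and>
     (\<forall>s\<in>{0..dist x y}. \<forall>t\<in>{0..dist x y}. dist (g s) (g t) = \<bar>s - t\<bar>)"

definition pi_geodesic :: "'a::metric_space itself \<Rightarrow> bool" where
  "pi_geodesic _ \<longleftrightarrow> (\<forall>x y::'a. dist x y < pi \<longrightarrow> (\<exists>g. geodesic_seg g x y))"

text \<open>p is the point g s on the side g (from x to y) of the triangle, and p' is its
  comparison point on the side [x',y'] of the comparison triangle in S^2.\<close>

definition side_pt :: "(real \<Rightarrow> 'a::metric_space) \<Rightarrow> 'a \<Rightarrow> 'a \<Rightarrow> real^3 \<Rightarrow> real^3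
    \<Rightarrow> 'a \<Rightarrow> real^3 \<Rightarrow> bool" where
  "side_pt g x y x' y' p p' \<longleftrightarrow>
     (\<exists>s\<in>{0..dist x y}. p = g s \<and> p' \<in> S2 \<and> sdist x' p' = s \<and> sdist p' y' = dist x y - s)"

definition tri_pt :: "(real \<Rightarrow> 'a::metric_space) \<Rightarrow> (real \<Rightarrow> 'a) \<Rightarrow> (real \<Rightarrow> 'a)
    \<Rightarrow> 'a \<Rightarrow> 'a \<Rightarrow> 'a \<Rightarrow> real^3 \<Rightarrow> real^3 \<Rightarrow> real^3 \<Rightarrow> 'a \<Rightarrow> real^3 \<Rightarrow> bool" where
  "tri_pt g1 g2 g3 x y z x' y' z' p p' \<longleftrightarrow>
     side_pt g1 x y x' y' p p' \<or> side_pt g2 y z y' z' p p' \<or> side_pt g3 z x z' x' p p'"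

definition CAT1 :: "'a::metric_space itself \<Rightarrow> bool" where
  "CAT1 A \<longleftrightarrow> pi_geodesic A \<and>
    (\<forall>(x::'a) y z g1 g2 g3 x' y' z'.
       geodesic_seg g1 x y \<and> geodesic_seg g2 y z \<and> geodesic_seg g3 z x \<and>
       dist x y + dist y z + dist z x < 2 * pi \<and>
       x' \<in> S2 \<and> y' \<in> S2 \<and> z' \<in> S2 \<and>
       sdist x' y' = dist x y \<and> sdist y' z' = dist y z \<and> sdist z' x' = dist z x \<longrightarrow>
       (\<forall>p p' q q'. tri_pt g1 g2 g3 x y z x' y' z' p p' \<and> tri_pt g1 g2 g3 x y z x' y' z' q q'
          \<longrightarrow> dist p q \<le> sdist p' q'))"

definition vicinal :: "('a::metric_space \<Rightarrow> 'a) \<Rightarrow> bool" where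
  "vicinal T \<longleftrightarrow> (\<forall>x y.
     let Cx = cos (dist (T x) x); Cy = cos (dist (T y) y) in
     (Cx^2 * (1 + Cy^2) + Cy^2 * (1 + Cx^2)) * cos (dist (T x) (T y))
       \<ge> Cx^2 * (1 + Cy^2) * cos (dist (T x) y) + Cy^2 * (1 + Cx^2) * cos (dist (T y) x))"

end

theory Submission
  imports Defs begin

lemma inner3: "(vector [a1,a2,a3] :: real^3) \<bullet> vector [b1,b2,b3] = a1*b1 + a2*b2 + a3*b3"
  by (simp add: inner_vec_def sum_3)

lemma S2_vec: "(vector [a1,a2,a3] :: real^3) \<in> S2 \<longleftrightarrow> a1*a1 + a2*a2 + a3*a3 = 1"
  by (simp add: S2_def norm_eq_sqrt_inner inner3)

lemma comparison_triangle:
  assumes "0 \<le> a" "a < pi/2" "0 \<le> b" "b < pi/2" "0 \<le> c" "c < pi/2"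
    "b \<le> a + c" "a \<le> b + c" "c \<le> a + b"
  shows "\<exists>x' y' z'. x' \<in> S2 \<and> y' \<in> S2 \<and> z' \<in> S2 \<and>
     sdist x' y' = a \<and> sdist y' z' = b \<and> sdist z' x' = c"
proof -
  have lo: "cos (a + c) \<le> cos b"
    by (rule cos_monotone_0_pi_le) (use assms in auto)
  have hi: "cos b \<le> cos \<bar>a - c\<bar>"
    by (rule cos_monotone_0_pi_le) (use assms in auto)
  have lo': "- (sin a * sin c) \<le> cos b - cos a * cos c" using lo by (simp add: cos_add)
  have hi': "cos b - cos a * cos c \<le> sin a * sin c" using hi by (simp add: cos_diff)
  define t where "t = (cos b - cos a * cos c) / (sin a * sin c)"
  have t1: "t*t \<le> 1 \<and> sin a * sin c * t = cos b - cos a * cos c"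
  proof (cases "sin a * sin c = 0")
    case True
    then have "cos b - cos a * cos c = 0" using lo' hi' True by linarith
    then show ?thesis using True by (simp add: t_def)
  next
    case False
    then have pos: "sin a * sin c > 0" using lo' hi' by linarith
    have "\<bar>t\<bar> \<le> 1" unfolding t_def using pos lo' hi' by (simp add: abs_le_iff divide_le_eq le_divide_eq)
    then have "t^2 \<le> 1" by (simp add: abs_square_le_1)
    then show ?thesis using False by (simp add: power2_eq_square t_def)
  qed
  define x' :: "real^3" where "x' = vector [1,0,0]"
  define y' :: "real^3" where "y' = vector [cos a, sin a, 0]"
  define z' :: "real^3" where "z' = vector [cos c, sin c * t, sin c * sqrt (1 - t*t)]"
  have sq: "sqrt (1 - t*t) * sqrt (1 - t*t) = 1 - t*t" using t1 by simp
  have "x' \<in> S2" unfolding x'_def S2_vec by simp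
  moreover have "y' \<in> S2" unfolding y'_def S2_vec by (simp add: sin_squared_eq[unfolded power2_eq_square])
  moreover have "z' \<in> S2" unfolding z'_def S2_vec
  proof -
    have "cos c * cos c + sin c * t * (sin c * t) + sin c * sqrt (1 - t * t) * (sin c * sqrt (1 - t * t))
        = cos c * cos c + sin c * sin c * (t*t + sqrt (1 - t*t) * sqrt (1 - t*t))" by (simp add: algebra_simps)
    also have "\<dots> = 1" using sq by (simp add: sin_squared_eq[unfolded power2_eq_square])
    finally show "cos c * cos c + sin c * t * (sin c * t) + sin c * sqrt (1 - t * t) * (sin c * sqrt (1 - t * t)) = 1" .
  qed
  moreover have "sdist x' y' = a" unfolding sdist_def x'_def y'_def inner3
    using assms by (simp add: arccos_cos)
  moreover have "sdist y' z' = b" unfolding sdist_def z'_def y'_def inner3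
  proof -
    have "cos a * cos c + sin a * (sin c * t) + 0 * (sin c * sqrt (1 - t * t)) = cos b"
      using t1 by (simp add: algebra_simps)
    then show "arccos (cos a * cos c + sin a * (sin c * t) + 0 * (sin c * sqrt (1 - t * t))) = b"
      using assms by (simp add: arccos_cos)
  qed
  moreover have "sdist z' x' = c" unfolding sdist_def x'_def z'_def inner3
    using assms by (simp add: arccos_cos)
  ultimately show ?thesis by blast
qed
lemma S2_norm: "u \<in> S2 \<Longrightarrow> norm u = 1"
  by (simp add: S2_def)

lemma S2_inner_bounds:
  assumes "u \<in> S2" "v \<in> S2" shows "-1 \<le> u \<bullet> v \<and> u \<bullet> v \<le> 1"
proof -
  have "\<bar>u \<bullet> v\<bar> \<le> norm u * norm v" by (rule Cauchy_Schwarz_ineq2)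
  then show ?thesis using S2_norm[OF assms(1)] S2_norm[OF assms(2)] by (simp add: abs_le_iff)
qed

lemma sdist_cos: assumes "u \<in> S2" "v \<in> S2" "sdist u v = t" shows "u \<bullet> v = cos t"
  using assms S2_inner_bounds[OF assms(1,2)] unfolding sdist_def by (metis cos_arccos)

lemma sdist_self: "u \<in> S2 \<Longrightarrow> sdist u u = 0"
  unfolding sdist_def using S2_norm by (simp add: power2_norm_eq_inner[symmetric])

lemma midpoint_ineq:
  fixes x y z :: "'a::metric_space"
  assumes cat: "CAT1 TYPE('a)" and dD: "\<And>u v::'a. dist u v < pi/2" and g: "geodesic_seg g x y"
  shows "cos (dist x z) + cos (dist y z) \<le> 2 * cos (dist x y / 2) * cos (dist (g (dist x y / 2)) z)"
proof -
  have pg: "pi_geodesic TYPE('a)" using cat by (simp add: CAT1_def)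
  have "dist y z < pi" using dD[of y z] using pi_gt_zero by linarith
  then obtain g2 where g2: "geodesic_seg g2 y z" using pg unfolding pi_geodesic_def by blast
  have "dist z x < pi" using dD[of z x] using pi_gt_zero by linarith
  then obtain g3 where g3: "geodesic_seg g3 z x" using pg unfolding pi_geodesic_def by blast
  define a where "a = dist x y"
  define b where "b = dist y z"
  define c where "c = dist z x"
  have "b \<le> a + c" unfolding a_def b_def c_def by (metis add.commute dist_commute dist_triangle)
  moreover have "a \<le> b + c" unfolding a_def b_def c_def by (metis add.commute dist_commute dist_triangle)
  moreover have "c \<le> a + b" unfolding a_def b_def c_def by (metis add.commute dist_commute dist_triangle)
  ultimately obtain x' y' z' where tri: "x' \<in> S2" "y' \<in> S2" "z' \<in> S2"
     "sdist x' y' = a" "sdist y' z' = b" "sdist z' x' = c"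
    using comparison_triangle[of a b c] dD unfolding a_def b_def c_def by force
  have xy: "x' \<bullet> y' = cos a" using sdist_cos tri by blast
  have yz: "y' \<bullet> z' = cos b" using sdist_cos tri by blast
  have zx: "z' \<bullet> x' = cos c" using sdist_cos tri by blast
  have nx: "x' \<bullet> x' = 1" "y' \<bullet> y' = 1" using tri S2_norm by (simp_all add: power2_norm_eq_inner[symmetric])
  define h where "h = a / 2"
  have a0: "0 \<le> a" "a < pi/2" using dD unfolding a_def by auto
  have ch: "cos h > 0" unfolding h_def using a0 by (intro cos_gt_zero_pi) auto
  have ca: "cos a = 2 * cos h * cos h - 1" unfolding h_def using cos_double_cos[of "a/2"] by (simp add: power2_eq_square)
  define m' where "m' = (1 / (2 * cos h)) *\<^sub>R (x' + y')"
  have mm: "m' \<bullet> m' = 1"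
  proof -
    have "m' \<bullet> m' = (x' \<bullet> x' + 2 * (x' \<bullet> y') + y' \<bullet> y') / (4 * cos h * cos h)"
      unfolding m'_def using ch by (simp add: inner_add_left inner_add_right inner_commute field_simps)
    also have "\<dots> = 1" using nx xy ca ch by (simp add: field_simps)
    finally show ?thesis .
  qed
  have mS2: "m' \<in> S2" unfolding S2_def using mm by (simp add: norm_eq_sqrt_inner)
  have xm: "x' \<bullet> m' = cos h"
  proof -
    have "x' \<bullet> m' = (x' \<bullet> x' + x' \<bullet> y') / (2 * cos h)"
      unfolding m'_def using ch by (simp add: inner_add_right field_simps)
    also have "\<dots> = cos h" using nx xy ca ch by (simp add: field_simps)
    finally show ?thesis .
  qed
  have my: "m' \<bullet> y' = cos h"
  proof -
    have "m' \<bullet> y' = (x' \<bullet> y' + y' \<bullet> y') / (2 * cos h)"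
      unfolding m'_def using ch by (simp add: inner_add_left field_simps)
    also have "\<dots> = cos h" using nx xy ca ch by (simp add: field_simps)
    finally show ?thesis .
  qed
  have mz: "m' \<bullet> z' = (cos b + cos c) / (2 * cos h)"
    unfolding m'_def using yz zx ch by (simp add: inner_add_left inner_add_right inner_commute add_divide_distrib)
  have h0: "0 \<le> h" "h \<le> pi" using a0 unfolding h_def by auto
  have sxm: "sdist x' m' = h" unfolding sdist_def xm using h0 by (simp add: arccos_cos)
  have smy: "sdist m' y' = a - h" unfolding sdist_def my using h0 by (simp add: arccos_cos h_def)
  have tp: "tri_pt g g2 g3 x y z x' y' z' (g h) m'"
  proof -
    have "side_pt g x y x' y' (g h) m'" unfolding side_pt_def
      using sxm smy mS2 a0 by (intro bexI[of _ h]) (auto simp: a_def h_def)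
    then show ?thesis unfolding tri_pt_def by blast
  qed
  have tq: "tri_pt g g2 g3 x y z x' y' z' z z'"
  proof -
    have "g3 0 = z" using g3 by (simp add: geodesic_seg_def)
    then show ?thesis unfolding tri_pt_def side_pt_def
      using sdist_self[OF tri(3)] tri(3) tri(6) by (auto simp: c_def intro!: bexI[of _ 0])
  qed
  have perim: "dist x y + dist y z + dist z x < 2 * pi" using dD[of x y] dD[of y z] dD[of z x] pi_gt_zero by linarith
  have "\<forall>(x::'a) y z g1 g2 g3 x' y' z'.
       geodesic_seg g1 x y \<and> geodesic_seg g2 y z \<and> geodesic_seg g3 z x \<and>
       dist x y + dist y z + dist z x < 2 * pi \<and>
       x' \<in> S2 \<and> y' \<in> S2 \<and> z' \<in> S2 \<and>
       sdist x' y' = dist x y \<and> sdist y' z' = dist y z \<and> sdist z' x' = dist z x \<longrightarrow>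
       (\<forall>p p' q q'. tri_pt g1 g2 g3 x y z x' y' z' p p' \<and> tri_pt g1 g2 g3 x y z x' y' z' q q'
          \<longrightarrow> dist p q \<le> sdist p' q')" using cat by (simp add: CAT1_def)
  then have le: "dist (g h) z \<le> sdist m' z'"
    using g g2 g3 perim tri tp tq unfolding a_def b_def c_def by blast
  have "m' \<bullet> z' \<le> cos (dist (g h) z)"
  proof -
    have bnd: "-1 \<le> m' \<bullet> z'" "m' \<bullet> z' \<le> 1" using S2_inner_bounds[OF mS2 tri(3)] by auto
    have "cos (sdist m' z') \<le> cos (dist (g h) z)"
      by (rule cos_monotone_0_pi_le) (use le bnd in \<open>auto simp: sdist_def intro: arccos_ubound\<close>)
    then show ?thesis unfolding sdist_def using bnd by (simp add: cos_arccos)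
  qed
  then have "cos b + cos c \<le> 2 * cos h * cos (dist (g h) z)" using mz ch by (simp add: field_simps)
  then show ?thesis unfolding h_def a_def b_def c_def by (simp add: dist_commute)
qed

lemma cos_lip: "cos (w::real) - cos z \<le> \<bar>w - z\<bar>"
proof -
  have "\<bar>cos w - cos z\<bar> = 2 * \<bar>sin ((w + z) / 2)\<bar> * \<bar>sin ((z - w) / 2)\<bar>"
    by (simp add: cos_diff_cos abs_mult)
  also have "\<dots> \<le> 2 * 1 * \<bar>(z - w) / 2\<bar>"
    by (intro mult_mono abs_sin_x_le_abs_x) (auto simp: abs_sin_le_one)
  also have "\<dots> = \<bar>w - z\<bar>" by simp
  finally show ?thesis by linarith
qed

definition Lset :: "(nat \<Rightarrow> 'a::metric_space) \<Rightarrow> 'a \<Rightarrow> real set" where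
  "Lset xs z = {r. eventually (\<lambda>n. r \<le> cos (dist z (xs n))) sequentially}"

definition Fa :: "(nat \<Rightarrow> 'a::metric_space) \<Rightarrow> 'a \<Rightarrow> real" where
  "Fa xs z = Sup (Lset xs z)"

context
  fixes D :: real
  assumes dD: "\<And>u v::'a::metric_space. dist u v \<le> D" and D2: "D < pi/2"
begin

lemma D0: "0 \<le> D" using dD[of undefined undefined] by simp

lemma cosD: "cos D \<le> cos (dist (u::'a) v)"
  by (rule cos_monotone_0_pi_le) (use dD D0 D2 in auto)

lemma cosD_pos: "0 < cos D" using D0 D2 by (intro cos_gt_zero_pi) auto

lemma dist_lt: "dist (u::'a) v < pi/2" using dD[of u v] D2 by linarith

lemma L_ne: "cos D \<in> Lset (xs::nat \<Rightarrow> 'a) z"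
  unfolding Lset_def using cosD by simp

lemma L_le1: "r \<in> Lset (xs::nat \<Rightarrow> 'a) z \<Longrightarrow> r \<le> 1"
  unfolding Lset_def by (auto simp: eventually_sequentially intro: order_trans[OF _ cos_le_one])

lemma L_bdd: "bdd_above (Lset (xs::nat \<Rightarrow> 'a) z)"
  by (rule bdd_aboveI[of _ 1]) (rule L_le1)

lemma L_upper: "r \<in> Lset (xs::nat \<Rightarrow> 'a) z \<Longrightarrow> r \<le> Fa xs z"
  unfolding Fa_def by (rule cSup_upper[OF _ L_bdd])

lemma Fa_ge: "cos D \<le> Fa (xs::nat \<Rightarrow> 'a) z" using L_upper L_ne by blast

lemma Fa_le1: "Fa (xs::nat \<Rightarrow> 'a) z \<le> 1"
  unfolding Fa_def by (rule cSup_least) (use L_ne[of xs z] L_le1 in auto)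

lemma Fa_least: "(\<And>r. r \<in> Lset (xs::nat \<Rightarrow> 'a) z \<Longrightarrow> r \<le> a) \<Longrightarrow> Fa xs z \<le> a"
  unfolding Fa_def by (rule cSup_least) (use L_ne[of xs z] in auto)

lemma Fa_lip: "Fa (xs::nat \<Rightarrow> 'a) z \<le> Fa xs w + dist z w"
proof -
  have "r \<le> Fa xs w + dist z w" if "r \<in> Lset xs z" for r
  proof -
    have "\<forall>\<^sub>F n in sequentially. r - dist z w \<le> cos (dist w (xs n))"
      using that unfolding Lset_def mem_Collect_eq
    proof (rule eventually_mono)
      fix n assume "r \<le> cos (dist z (xs n))"
      moreover have "cos (dist z (xs n)) - cos (dist w (xs n)) \<le> dist z w"
        using cos_lip[of "dist z (xs n)" "dist w (xs n)"] dist_triangle[of z "xs n" w]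
          dist_triangle[of w "xs n" z] by (simp add: dist_commute abs_le_iff)
      ultimately show "r - dist z w \<le> cos (dist w (xs n))" by linarith
    qed
    then have "r - dist z w \<in> Lset xs w" unfolding Lset_def by simp
    then show ?thesis using L_upper by fastforce
  qed
  then show ?thesis by (rule Fa_least)
qed

lemma Fa_mid:
  assumes cat: "CAT1 TYPE('a)" and g: "geodesic_seg g x y"
  shows "Fa (xs::nat \<Rightarrow> 'a) x + Fa xs y \<le> 2 * cos (dist x y / 2) * Fa xs (g (dist x y / 2))"
proof -
  define c where "c = cos (dist x y / 2)"
  define m where "m = g (dist x y / 2)"
  have c0: "c > 0" unfolding c_def by (rule cos_gt_zero_pi) (use dist_lt[of x y] zero_le_dist[of x y] pi_gt_zero in linarith)+
  have key: "r + s \<le> 2 * c * Fa xs m" if r: "r \<in> Lset xs x" and s: "s \<in> Lset xs y" for r s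
  proof -
    have "\<forall>\<^sub>F n in sequentially. (r + s) / (2 * c) \<le> cos (dist m (xs n))"
      using r s unfolding Lset_def mem_Collect_eq
    proof (rule eventually_elim2)
      fix n assume "r \<le> cos (dist x (xs n))" "s \<le> cos (dist y (xs n))"
      moreover have "cos (dist x (xs n)) + cos (dist y (xs n)) \<le> 2 * c * cos (dist m (xs n))"
        unfolding c_def m_def using midpoint_ineq[OF cat _ g] dist_lt by blast
      ultimately show "(r + s) / (2 * c) \<le> cos (dist m (xs n))" using c0 by (simp add: field_simps)
    qed
    then have "(r + s) / (2 * c) \<in> Lset xs m" unfolding Lset_def by simp
    then have "(r + s) / (2 * c) \<le> Fa xs m" by (rule L_upper)
    then show ?thesis using c0 by (simp add: field_simps)
  qed
  have "s \<le> 2 * c * Fa xs m - Fa xs x" if s: "s \<in> Lset xs y" for s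
  proof -
    have "Fa xs x \<le> 2 * c * Fa xs m - s" using key[OF _ s] by (intro Fa_least) (simp add: field_simps)
    then show ?thesis by linarith
  qed
  then have "Fa xs y \<le> 2 * c * Fa xs m - Fa xs x" by (rule Fa_least)
  then show ?thesis unfolding c_def m_def by linarith
qed

lemma Fa_vic:
  fixes T :: "'a \<Rightarrow> 'a" and xs :: "nat \<Rightarrow> 'a"
  assumes vic: "vicinal T" and hs: "\<And>n. xs (Suc n) = T (xs n)"
  shows "Fa xs z \<le> Fa xs (T z)"
proof (rule Fa_least)
  fix r assume r: "r \<in> Lset xs z"
  then obtain N where vN: "\<And>n. n \<ge> N \<Longrightarrow> r \<le> cos (dist z (xs n))"
    unfolding Lset_def eventually_sequentially by blast
  have r1: "r \<le> 1" using r by (rule L_le1)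
  define cD where "cD = cos D"
  have cD0: "0 < cD" unfolding cD_def by (rule cosD_pos)
  define \<delta> where "\<delta> = cD^2 / 4"
  have cD1: "cD \<le> 1" unfolding cD_def by simp
  have cD21: "cD^2 \<le> 1" using cD0 cD1 by (intro power_le_one) auto
  have d0: "0 < \<delta>" "\<delta> < 1" unfolding \<delta>_def using cD0 cD21 by auto
  define u where "u n = cos (dist (T z) (xs n))" for n
  define M where "M n = max 0 (r - u n)" for n
  define c where "c = cos (dist (T z) z)"
  have cb: "cD \<le> c" "c \<le> 1" unfolding c_def cD_def using cosD by auto
  have ub: "cD \<le> u n" for n unfolding u_def cD_def using cosD by auto
  have step: "M (Suc n) \<le> (1 - \<delta>) * M n" if n: "n \<ge> N" for n
  proof -
    define Cn where "Cn = cos (dist (T (xs n)) (xs n))"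
    have Cb: "cD \<le> Cn" "Cn \<le> 1" unfolding Cn_def cD_def using cosD by auto
    define A where "A = c^2 * (1 + Cn^2)"
    define B where "B = Cn^2 * (1 + c^2)"
    have vi: "(A + B) * cos (dist (T z) (T (xs n))) \<ge> A * cos (dist (T z) (xs n)) + B * cos (dist (T (xs n)) z)"
      using vic unfolding vicinal_def Let_def A_def B_def c_def Cn_def by blast
    have v': "r \<le> cos (dist (T (xs n)) z)" using vN[of "Suc n"] n hs[of n] by (simp add: dist_commute)
    have c21: "cD^2 \<le> c^2" by (rule power_mono) (use cb Cb cD0 in linarith)+
    have c22: "c^2 \<le> 1" by (rule power_le_one) (use cb Cb cD0 in linarith)+
    have c23: "cD^2 \<le> Cn^2" by (rule power_mono) (use cb Cb cD0 in linarith)+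
    have c24: "Cn^2 \<le> 1" by (rule power_le_one) (use cb Cb cD0 in linarith)+
    note c2 = c21 c22 c23 c24
    have A0: "0 \<le> A" unfolding A_def by simp
    have A2: "A \<le> 2" unfolding A_def using mult_mono[of "c^2" 1 "1+Cn^2" 2] c2 by simp
    have "Cn^2 * 1 \<le> B" unfolding B_def by (rule mult_left_mono) auto
    then have B0: "cD^2 \<le> B" using c2 by simp
    have B2: "B \<le> 2" unfolding B_def using mult_mono[of "Cn^2" 1 "1+c^2" 2] c2 by simp
    have cDp: "0 < cD^2" using cD0 by simp
    have ABpos: "0 < A + B" using A0 B0 cDp by linarith
    have e: "(A + B) * (r - u (Suc n)) \<le> A * (r - u n)"
    proof -
      have "B * r \<le> B * cos (dist (T (xs n)) z)"
        by (rule mult_left_mono[OF v']) (use B0 cDp in linarith)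
      then have "(A + B) * u (Suc n) \<ge> A * u n + B * r"
        using vi hs[of n] unfolding u_def by simp
      then show ?thesis by (simp add: algebra_simps)
    qed
    have M0: "0 \<le> M n" unfolding M_def by simp
    have "A * (r - u n) \<le> A * M n" unfolding M_def using A0 by (intro mult_left_mono) auto
    also have "A * M n \<le> (A + B) * ((1 - \<delta>) * M n)"
    proof -
      have "\<delta> * (A + B) \<le> \<delta> * 4" by (rule mult_left_mono) (use A2 B2 d0 in auto)
      then have "\<delta> * (A + B) \<le> B" using B0 unfolding \<delta>_def by simp
      then have "0 \<le> (B - \<delta> * (A + B)) * M n" using M0 by simp
      then show ?thesis by (simp add: algebra_simps)
    qed
    finally have "(A + B) * (r - u (Suc n)) \<le> (A + B) * ((1 - \<delta>) * M n)" using e by linarith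
    then have "r - u (Suc n) \<le> (1 - \<delta>) * M n" using ABpos by simp
    moreover have "0 \<le> (1 - \<delta>) * M n" using d0 M0 by simp
    ultimately show ?thesis unfolding M_def by simp
  qed
  have Mk: "M (N + k) \<le> (1 - \<delta>)^k" for k
  proof (induction k)
    case 0
    have "u N \<ge> 0" using ub[of N] cD0 by linarith
    then show ?case unfolding M_def using r1 by simp
  next
    case (Suc k)
    have "M (N + Suc k) \<le> (1 - \<delta>) * M (N + k)" using step[of "N + k"] by simp
    also have "\<dots> \<le> (1 - \<delta>) * (1 - \<delta>)^k" using Suc d0 by (intro mult_left_mono) auto
    finally show ?case by simp
  qed
  show "r \<le> Fa xs (T z)"
  proof (rule field_le_epsilon)
    fix \<eta> :: real assume \<eta>: "0 < \<eta>"
    have "(\<lambda>k. (1 - \<delta>)^k) \<longlonglongrightarrow> 0" using d0 by (intro LIMSEQ_realpow_zero) auto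
    then have "\<forall>\<^sub>F k in sequentially. (1 - \<delta>)^k < \<eta>" using \<eta> by (rule order_tendstoD)
    then obtain K where K: "\<And>k. k \<ge> K \<Longrightarrow> (1 - \<delta>)^k < \<eta>" unfolding eventually_sequentially by blast
    have "\<forall>\<^sub>F n in sequentially. r - \<eta> \<le> cos (dist (T z) (xs n))"
      unfolding eventually_sequentially
    proof (intro exI allI impI)
      fix n assume "N + K \<le> n"
      then have k: "n = N + (n - N)" "n - N \<ge> K" by auto
      define k where "k = n - N"
      have "M n < \<eta>" using Mk[of k] K[OF k(2)[folded k_def]] k(1)[folded k_def] by simp
      then show "r - \<eta> \<le> cos (dist (T z) (xs n))" unfolding M_def u_def by simp
    qed
    then have "r - \<eta> \<in> Lset xs (T z)" unfolding Lset_def by simp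
    then have "r - \<eta> \<le> Fa xs (T z)" by (rule L_upper)
    then show "r \<le> Fa xs (T z) + \<eta>" by simp
  qed
qed

end

theorem corollary4p3:
  fixes T :: "'a::complete_space \<Rightarrow> 'a"
  assumes "CAT1 TYPE('a)"
    and "bounded (UNIV :: 'a set)"
    and "diameter (UNIV :: 'a set) < pi / 2"
    and "vicinal T"
  shows "\<exists>x. T x = x"
proof -
  note cat = assms(1)
  define D where "D = diameter (UNIV::'a set)"
  have dD: "\<And>u v::'a. dist u v \<le> D" unfolding D_def using assms(2) by (intro diameter_bounded_bound) auto
  have D2: "D < pi/2" using assms(3) D_def by simp
  define xs :: "nat \<Rightarrow> 'a" where "xs n = (T ^^ n) undefined" for n
  have hs: "\<And>n. xs (Suc n) = T (xs n)" unfolding xs_def by simp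
  define F where "F = Fa xs"
  define s where "s = Sup (range F)"
  have bdd: "bdd_above (range F)" unfolding F_def by (rule bdd_aboveI[of _ 1]) (use Fa_le1[OF dD D2] in auto)
  have Fs: "F z \<le> s" for z unfolding s_def by (rule cSup_upper[OF _ bdd]) simp
  have cD0: "0 < cos D" by (rule cosD_pos[OF dD D2])
  have s0: "0 < s" using Fs[of undefined] Fa_ge[OF dD D2, of xs undefined] cD0 unfolding F_def by linarith
  have dlt: "dist (u::'a) v < pi/2" for u v by (rule dist_lt[OF dD D2])
  have K: "F x + F y \<le> 2 * cos (dist x y / 2) * s" for x y
  proof -
    have pg: "pi_geodesic TYPE('a)" using cat by (simp add: CAT1_def)
    have "dist x y < pi" using dlt[of x y] pi_gt_zero by linarith
    then obtain g where g: "geodesic_seg g x y" using pg unfolding pi_geodesic_def by blast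
    have c0: "cos (dist x y / 2) > 0"
      by (rule cos_gt_zero_pi) (use dlt[of x y] zero_le_dist[of x y] pi_gt_zero in linarith)+
    have "F x + F y \<le> 2 * cos (dist x y / 2) * F (g (dist x y / 2))"
      unfolding F_def by (rule Fa_mid[OF dD D2 cat g])
    also have "\<dots> \<le> 2 * cos (dist x y / 2) * s" using c0 Fs by (intro mult_left_mono) auto
    finally show ?thesis .
  qed
  have "\<forall>k. \<exists>z. s - 1 / real (Suc k) < F z"
  proof
    fix k
    have "s - 1 / real (Suc k) < s" by simp
    then have "\<exists>x\<in>range F. s - 1 / real (Suc k) < x" unfolding s_def
      using less_cSup_iff[of "range F"] bdd by auto
    then show "\<exists>z. s - 1 / real (Suc k) < F z" by auto
  qed
  then obtain zs where zs: "\<And>k. s - 1 / real (Suc k) < F (zs k)" by metis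
  have Cz: "Cauchy zs"
  proof (rule metric_CauchyI)
    fix e :: real assume e: "0 < e"
    define e' where "e' = min e 1"
    have e': "0 < e'" "e' \<le> e" "e' \<le> 1" using e unfolding e'_def by auto
    define t where "t = 1 - cos (e' / 2)"
    have "cos (e'/2) < cos 0" by (rule cos_monotone_0_pi) (use e' pi_gt3 in auto)
    then have t0: "0 < t" unfolding t_def by simp
    obtain M where M: "inverse (real (Suc M)) < t * s" using reals_Archimedean[of "t * s"] t0 s0 by auto
    show "\<exists>M. \<forall>m\<ge>M. \<forall>n\<ge>M. dist (zs m) (zs n) < e"
    proof (intro exI allI impI)
      fix m n assume mn: "M \<le> m" "M \<le> n"
      have im: "1 / real (Suc m) \<le> inverse (real (Suc M))" using mn
        by (simp add: divide_inverse)
      have iN: "1 / real (Suc n) \<le> inverse (real (Suc M))" using mn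
        by (simp add: divide_inverse)
      define d where "d = dist (zs m) (zs n)"
      have "2 * s - 2 * (t * s) < F (zs m) + F (zs n)" using zs[of m] zs[of n] im iN M by linarith
      also have "\<dots> \<le> 2 * cos (d / 2) * s" unfolding d_def by (rule K)
      finally have "2 * s * (1 - t) < 2 * s * cos (d/2)" by (simp add: algebra_simps)
      then have cc: "cos (e'/2) < cos (d/2)" using s0 unfolding t_def by simp
      show "dist (zs m) (zs n) < e"
      proof (rule ccontr)
        assume "\<not> dist (zs m) (zs n) < e"
        then have "e' / 2 \<le> d / 2" using e' unfolding d_def by simp
        then have "cos (d/2) \<le> cos (e'/2)"
          by (intro cos_monotone_0_pi_le) (use e' dlt[of "zs m" "zs n"] pi_gt_zero in \<open>auto simp: d_def\<close>)
        then show False using cc by simp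
      qed
    qed
  qed
  then obtain z where lim: "zs \<longlonglongrightarrow> z" using Cauchy_convergent convergent_def by blast
  have Fz: "s \<le> F z"
  proof (rule field_le_epsilon)
    fix \<epsilon> :: real assume \<epsilon>: "0 < \<epsilon>"
    have "\<forall>\<^sub>F k in sequentially. dist (zs k) z < \<epsilon>/2" using lim \<epsilon> by (intro tendstoD) auto
    then obtain N1 where N1: "\<And>k. k \<ge> N1 \<Longrightarrow> dist (zs k) z < \<epsilon>/2" unfolding eventually_sequentially by blast
    obtain N2 where N2: "inverse (real (Suc N2)) < \<epsilon>/2" using reals_Archimedean[of "\<epsilon>/2"] \<epsilon> by auto
    define k where "k = max N1 N2"
    have i: "1 / real (Suc k) \<le> inverse (real (Suc N2))" unfolding k_def
      by (simp add: divide_inverse)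
    have "F (zs k) \<le> F z + dist (zs k) z" unfolding F_def by (rule Fa_lip[OF dD D2])
    then show "s \<le> F z + \<epsilon>" using zs[of k] N1[of k] i N2 unfolding k_def by simp
  qed
  have FTz: "s \<le> F (T z)" using Fz Fa_vic[where D=D and T=T and xs=xs and z=z, OF dD D2 assms(4) hs] unfolding F_def by simp
  have "2 * s \<le> 2 * cos (dist z (T z) / 2) * s" using K[of z "T z"] Fz FTz by linarith
  then have c1: "1 \<le> cos (dist z (T z) / 2)" using s0 by simp
  have "dist z (T z) = 0"
  proof (rule ccontr)
    assume "dist z (T z) \<noteq> 0"
    then have "0 < dist z (T z) / 2" by simp
    then have "cos (dist z (T z) / 2) < cos 0"
      by (intro cos_monotone_0_pi) (use dlt[of z "T z"] pi_gt_zero in linarith)+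
    then show False using c1 by simp
  qed
  then have "T z = z" by simp
  then show ?thesis by blast
qed

end
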